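(* For all $Y,Z\in\mathbb{N}^\mathbb{N}$, the following are equivalent: (1) $Y=\mathcal{J}^\omega(Z)$; (2) for every $n$ there exists a finite string $\sigma_n\subset Z$ with $|\sigma_n|>n$ such that $Y\restriction n=J^\omega(\sigma_n)$.
   Context: Strings are coded by natural numbers via a fixed computable coding with $\sigma\subsetneq\tau$ implying code$(\sigma)<$ code$(\tau)$. For $\sigma$ finite or infinite, $\{e\}^\sigma_t(n)\downarrow$ means the $e$-th machine on input $n$ with oracle $\sigma$ halts in fewer than $\min(|\sigma|,t)$ steps. For $Z\in\mathbb{N}^\mathbb{N}$: $t_{-1}=1$, $t_n=\max\{t_{n-1}+1,\mu t(\{n\}^Z_t(n)\downarrow)\}$ ($t_n=t_{n-1}+1$ if no such $t$), $\mathcal{J}(Z)(n)=Z\restriction t_n$, and $\mathcal{J}^\omega(Z)(n)=\mathcal{J}^{n+1}(Z)(0)$. For finite $\sigma$: $t_{-1}=1$, $t_n=\max\{t_{n-1}+1,\mu t(\{n\}^{\sigma\restriction t}(n)\downarrow)\}$ ($t_n=t_{n-1}+1$ if no such $t$), $J(\sigma)=\langle\sigma\restriction t_0,\dots,\sigma\restriction t_{k-1}\rangle$ with $k$ least such that $t_k>|\sigma|$; $J^m$ is the $m$-fold iterate (entries of strings being codes of strings); and $J^\omega(\sigma)=\langle J(\sigma)(0),J^2(\sigma)(0),\dots,J^{n-1}(\sigma)(0)\rangle$ where $n$ is least with $J^n(\sigma)=\emptyset$. *)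

theory Defs
  imports Main "HOL-Library.Sublist"
begin

text \<open>
  Abstract model of the fixed coding of strings and of the oracle machines.
  code: the coding of strings (nat lists) by naturals.
  H e n f s: the e-th machine on input n with oracle f halts in fewer than s steps.
\<close>

definition oracle_model ::
  "(nat list \<Rightarrow> nat) \<Rightarrow> (nat \<Rightarrow> nat \<Rightarrow> (nat \<Rightarrow> nat) \<Rightarrow> nat \<Rightarrow> bool) \<Rightarrow> bool" where
  "oracle_model code H \<longleftrightarrow>
     inj code \<and>
     (\<forall>\<sigma> \<tau>. strict_prefix \<sigma> \<tau> \<longrightarrow> code \<sigma> < code \<tau>) \<and>
     (\<forall>e n f g s. (\<forall>i<s. f i = g i) \<longrightarrow> H e n f s = H e n g s) \<and>
     (\<forall>e n f s s'. H e n f s \<and> s \<le> s' \<longrightarrow> H e n f s') \<and>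
     (\<forall>e n f. \<not> H e n f 0)"

definition restr :: "(nat \<Rightarrow> nat) \<Rightarrow> nat \<Rightarrow> nat list" where
  "restr Z t = map Z [0..<t]"

text \<open>Extension of a finite string by zeros (irrelevant by the use principle).\<close>
definition ext :: "nat list \<Rightarrow> nat \<Rightarrow> nat" where
  "ext \<sigma> i = (if i < length \<sigma> then \<sigma> ! i else 0)"

definition stepT :: "nat \<Rightarrow> (nat \<Rightarrow> bool) \<Rightarrow> nat" where
  "stepT p P = (if \<exists>t. P t then max (Suc p) (LEAST t. P t) else Suc p)"

text \<open>Infinite case: {n}^Z_t(n) halts iff H n n Z t.\<close>
primrec tZ :: "(nat \<Rightarrow> nat \<Rightarrow> (nat \<Rightarrow> nat) \<Rightarrow> nat \<Rightarrow> bool) \<Rightarrow> (nat \<Rightarrow> nat) \<Rightarrow> nat \<Rightarrow> nat" where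
  "tZ H Z 0 = stepT 1 (\<lambda>t. H 0 0 Z t)"
| "tZ H Z (Suc n) = stepT (tZ H Z n) (\<lambda>t. H (Suc n) (Suc n) Z t)"

definition JZ :: "(nat list \<Rightarrow> nat) \<Rightarrow> (nat \<Rightarrow> nat \<Rightarrow> (nat \<Rightarrow> nat) \<Rightarrow> nat \<Rightarrow> bool)
    \<Rightarrow> (nat \<Rightarrow> nat) \<Rightarrow> (nat \<Rightarrow> nat)" where
  "JZ code H Z n = code (restr Z (tZ H Z n))"

definition JZomega :: "(nat list \<Rightarrow> nat) \<Rightarrow> (nat \<Rightarrow> nat \<Rightarrow> (nat \<Rightarrow> nat) \<Rightarrow> nat \<Rightarrow> bool)
    \<Rightarrow> (nat \<Rightarrow> nat) \<Rightarrow> (nat \<Rightarrow> nat)" where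
  "JZomega code H Z n = ((JZ code H) ^^ (Suc n)) Z 0"

text \<open>Finite case: {e}^\<sigma>(n) halts iff it halts in fewer than |\<sigma>| steps.\<close>
definition haltsF :: "(nat \<Rightarrow> nat \<Rightarrow> (nat \<Rightarrow> nat) \<Rightarrow> nat \<Rightarrow> bool) \<Rightarrow> nat \<Rightarrow> nat list \<Rightarrow> nat \<Rightarrow> bool" where
  "haltsF H e \<sigma> n = H e n (ext \<sigma>) (length \<sigma>)"

primrec tF :: "(nat \<Rightarrow> nat \<Rightarrow> (nat \<Rightarrow> nat) \<Rightarrow> nat \<Rightarrow> bool) \<Rightarrow> nat list \<Rightarrow> nat \<Rightarrow> nat" where
  "tF H \<sigma> 0 = stepT 1 (\<lambda>t. haltsF H 0 (take t \<sigma>) 0)"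
| "tF H \<sigma> (Suc n) = stepT (tF H \<sigma> n) (\<lambda>t. haltsF H (Suc n) (take t \<sigma>) (Suc n))"

definition Jfin :: "(nat list \<Rightarrow> nat) \<Rightarrow> (nat \<Rightarrow> nat \<Rightarrow> (nat \<Rightarrow> nat) \<Rightarrow> nat \<Rightarrow> bool)
    \<Rightarrow> nat list \<Rightarrow> nat list" where
  "Jfin code H \<sigma> =
     map (\<lambda>i. code (take (tF H \<sigma> i) \<sigma>)) [0..<(LEAST k. tF H \<sigma> k > length \<sigma>)]"

definition Jfinomega :: "(nat list \<Rightarrow> nat) \<Rightarrow> (nat \<Rightarrow> nat \<Rightarrow> (nat \<Rightarrow> nat) \<Rightarrow> nat \<Rightarrow> bool)
    \<Rightarrow> nat list \<Rightarrow> nat list" where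
  "Jfinomega code H \<sigma> =
     map (\<lambda>i. ((Jfin code H) ^^ (Suc i)) \<sigma> ! 0)
       [0..<(LEAST n. ((Jfin code H) ^^ n) \<sigma> = []) - 1]"

end

theory Submission
  imports Defs
begin

lemma restr_len[simp]: "length (restr Z L) = L" by (simp add: restr_def)
lemma restr_nth[simp]: "k < L \<Longrightarrow> restr Z L ! k = Z k" by (simp add: restr_def)
lemma restr_take: "t \<le> L \<Longrightarrow> take t (restr Z L) = restr Z t"
  by (simp add: restr_def take_map min_def)

lemma stepT_ge: "Suc p \<le> stepT p P" by (simp add: stepT_def)

lemma tZ_ge: "i + 2 \<le> tZ H X i"
proof (induction i)
  case 0 then show ?case using stepT_ge[of 1] by simp
next
  case (Suc i) then show ?case using stepT_ge[of "tZ H X i" "H (Suc i) (Suc i) X"] by simp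
qed

lemma tZ_Suc: "tZ H X i < tZ H X (Suc i)"
  using stepT_ge[of "tZ H X i" "H (Suc i) (Suc i) X"] by simp

lemma tZ_mono: "i \<le> j \<Longrightarrow> tZ H X i \<le> tZ H X j"
proof (induction j)
  case (Suc j) thus ?case using tZ_Suc[of H X j] by (auto simp: le_Suc_eq)
qed simp

lemma tF_ge: "i + 2 \<le> tF H \<tau> i"
proof (induction i)
  case 0 then show ?case using stepT_ge[of 1] by simp
next
  case (Suc i) then show ?case using stepT_ge[of "tF H \<tau> i" "\<lambda>t. haltsF H (Suc i) (take t \<tau>) (Suc i)"] by simp
qed

lemma tF_Suc: "tF H \<tau> i < tF H \<tau> (Suc i)"
  using stepT_ge[of "tF H \<tau> i" "\<lambda>t. haltsF H (Suc i) (take t \<tau>) (Suc i)"] by simp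

lemma stepT_agree:
  assumes "\<forall>t\<le>A. P t = Q t" "stepT p Q \<le> A"
  shows "stepT p P = stepT p Q \<or> (A < stepT p P \<and> (\<exists>t>A. P t) \<and> (\<forall>t. \<not> Q t))"
proof (cases "\<exists>t. Q t")
  case True
  define w where "w = (LEAST t. Q t)"
  have Qw: "Q w" unfolding w_def using True by (metis LeastI)
  have "w \<le> A" using assms(2) True by (simp add: stepT_def w_def)
  hence Pw: "P w" using Qw assms(1) by auto
  have "(LEAST t. P t) = w"
  proof (rule Least_equality)
    show "P w" by fact
    fix y assume "P y"
    show "w \<le> y"
    proof (rule ccontr)
      assume "\<not> w \<le> y"
      hence "y < w" by simp
      hence "Q y" using \<open>P y\<close> assms(1) \<open>w \<le> A\<close> by auto
      thus False using \<open>y < w\<close> w_def not_less_Least by blast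
    qed
  qed
  hence "stepT p P = stepT p Q" using True Pw by (simp add: stepT_def w_def; metis)
  thus ?thesis by simp
next
  case False
  show ?thesis
  proof (cases "\<exists>t. P t")
    case True
    define w where "w = (LEAST t. P t)"
    have Pw: "P w" unfolding w_def using True by (metis LeastI)
    have "A < w"
    proof (rule ccontr)
      assume "\<not> A < w" thus False using Pw assms(1) False by auto
    qed
    have "A < stepT p P" using True \<open>A < w\<close> by (simp add: stepT_def w_def)
    thus ?thesis using Pw \<open>A < w\<close> False by blast
  next
    case f2: False
    thus ?thesis using False by (simp add: stepT_def)
  qed
qed

lemma use_principle:
  assumes "oracle_model code H" "\<forall>k<t. f k = g k"
  shows "H e n f t = H e n g t"
  using assms unfolding oracle_model_def by blast

lemma Pfin_agree:
  assumes "oracle_model code H" "A \<le> length \<tau>" "\<forall>k<A. \<tau>!k = X k" "t \<le> A"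
  shows "haltsF H e (take t \<tau>) n = H e n X t"
proof -
  have len: "length (take t \<tau>) = t" using assms by simp
  have "\<forall>k<t. ext (take t \<tau>) k = X k" using assms by (simp add: ext_def)
  thus ?thesis unfolding haltsF_def len using use_principle[OF assms(1)] by blast
qed

lemma stepT_fin_inf:
  assumes om: "oracle_model code H" and A: "A \<le> length \<tau>" "\<forall>k<A. \<tau>!k = X k"
    and le: "stepT p (\<lambda>t. H e n X t) \<le> A"
  shows "stepT p (\<lambda>t. haltsF H e (take t \<tau>) n) = stepT p (\<lambda>t. H e n X t)
     \<or> (A < stepT p (\<lambda>t. haltsF H e (take t \<tau>) n) \<and> A < length \<tau>)"
proof -
  have ag: "\<forall>t\<le>A. haltsF H e (take t \<tau>) n = H e n X t"
    using Pfin_agree[OF om A] by blast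
  from stepT_agree[OF ag le] show ?thesis
  proof
    assume h: "A < stepT p (\<lambda>t. haltsF H e (take t \<tau>) n) \<and> (\<exists>t>A. haltsF H e (take t \<tau>) n) \<and> (\<forall>t. \<not> H e n X t)"
    then obtain t where t: "t > A" "haltsF H e (take t \<tau>) n" by blast
    have "A < length \<tau>"
    proof (rule ccontr)
      assume "\<not> A < length \<tau>"
      hence eq: "A = length \<tau>" using A by simp
      hence "take t \<tau> = take A \<tau>" using t by simp
      hence "haltsF H e (take A \<tau>) n" using t by simp
      hence "H e n X A" using ag by simp
      thus False using h by blast
    qed
    thus ?thesis using h by blast
  qed simp
qed

lemma lemmaB:
  assumes om: "oracle_model code H" and A: "A \<le> length \<tau>" "\<forall>k<A. \<tau>!k = X k"
  shows "tZ H X i \<le> A \<Longrightarrow> tF H \<tau> i = tZ H X i \<or> (A < tF H \<tau> i \<and> A < length \<tau>)"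
proof (induction i)
  case 0
  have "tZ H X 0 = stepT 1 (\<lambda>t. H 0 0 X t)" by simp
  moreover have "tF H \<tau> 0 = stepT 1 (\<lambda>t. haltsF H 0 (take t \<tau>) 0)" by simp
  ultimately show ?case using stepT_fin_inf[OF om A, of 1 0 0] 0 by simp
next
  case (Suc i)
  have "tZ H X i \<le> A" using Suc.prems tZ_Suc[of H X i] by simp
  from Suc.IH[OF this] show ?case
  proof
    assume e: "tF H \<tau> i = tZ H X i"
    have "tZ H X (Suc i) = stepT (tZ H X i) (\<lambda>t. H (Suc i) (Suc i) X t)" by simp
    moreover have "tF H \<tau> (Suc i) = stepT (tZ H X i) (\<lambda>t. haltsF H (Suc i) (take t \<tau>) (Suc i))"
      using e by simp
    ultimately show ?case using stepT_fin_inf[OF om A, of "tZ H X i" "Suc i" "Suc i"] Suc.prems by simp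
  next
    assume "A < tF H \<tau> i \<and> A < length \<tau>"
    thus ?case using tF_Suc[of H \<tau> i] by simp
  qed
qed


lemma len_Jfin: "length (Jfin code H \<tau>) = (LEAST k. length \<tau> < tF H \<tau> k)"
  by (simp add: Jfin_def)

lemma Jfin_nth: "i < length (Jfin code H \<tau>) \<Longrightarrow> Jfin code H \<tau> ! i = code (take (tF H \<tau> i) \<tau>)"
  by (simp add: Jfin_def)

lemma Jfin_tF_le: "i < length (Jfin code H \<tau>) \<Longrightarrow> tF H \<tau> i \<le> length \<tau>"
  unfolding len_Jfin using not_less_Least by (metis not_le)

lemma Jfin_len_le: "length (Jfin code H \<tau>) \<le> length \<tau> - 1"
proof -
  have "length \<tau> < tF H \<tau> (length \<tau> - 1)" using tF_ge[of "length \<tau> - 1" H \<tau>] by linarith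
  thus ?thesis unfolding len_Jfin by (rule Least_le)
qed

lemma Jfin_short: "length \<tau> < 2 \<Longrightarrow> Jfin code H \<tau> = []"
  using Jfin_len_le[of code H \<tau>] by simp

lemma lemmaC:
  assumes om: "oracle_model code H" and \<tau>: "\<tau> = restr X (tZ H X j)"
  shows "Jfin code H \<tau> = restr (JZ code H X) (Suc j)"
proof -
  have A: "tZ H X j \<le> length \<tau>" "\<forall>k<tZ H X j. \<tau>!k = X k" using \<tau> by auto
  have eq: "tF H \<tau> i = tZ H X i" if "i \<le> j" for i
    using lemmaB[OF om A, of i] tZ_mono[OF that, of H X] \<tau> by auto
  have L: "(LEAST k. length \<tau> < tF H \<tau> k) = Suc j"
  proof (rule Least_equality)
    show "length \<tau> < tF H \<tau> (Suc j)" using eq[of j] tF_Suc[of H \<tau> j] \<tau> by simp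
    fix y assume "length \<tau> < tF H \<tau> y"
    show "Suc j \<le> y"
    proof (rule ccontr)
      assume "\<not> Suc j \<le> y"
      hence "y \<le> j" by simp
      hence "tF H \<tau> y \<le> tZ H X j" using eq tZ_mono by metis
      thus False using \<open>length \<tau> < tF H \<tau> y\<close> \<tau> by simp
    qed
  qed
  show ?thesis
  proof (rule nth_equalityI)
    show "length (Jfin code H \<tau>) = length (restr (JZ code H X) (Suc j))"
      using L len_Jfin by simp
    fix i assume "i < length (Jfin code H \<tau>)"
    hence i: "i < Suc j" using L len_Jfin by metis
    have "Jfin code H \<tau> ! i = code (take (tF H \<tau> i) \<tau>)" using Jfin_nth \<open>i < length _\<close> by blast
    also have "\<dots> = code (restr X (tZ H X i))"
      using eq[of i] i \<tau> restr_take tZ_mono[of i j H X] by simp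
    also have "\<dots> = restr (JZ code H X) (Suc j) ! i" using i by (simp add: JZ_def)
    finally show "Jfin code H \<tau> ! i = restr (JZ code H X) (Suc j) ! i" .
  qed
qed

primrec LL :: "(nat list \<Rightarrow> nat) \<Rightarrow> (nat \<Rightarrow> nat \<Rightarrow> (nat \<Rightarrow> nat) \<Rightarrow> nat \<Rightarrow> bool) \<Rightarrow> (nat \<Rightarrow> nat) \<Rightarrow> nat \<Rightarrow> nat \<Rightarrow> nat" where
  "LL code H Z 0 b = 1"
| "LL code H Z (Suc k) b = tZ H ((JZ code H ^^ b) Z) (LL code H Z k (Suc b) - 1)"

lemma LL_ge: "Suc k \<le> LL code H Z k b"
proof (induction k arbitrary: b)
  case (Suc k)
  have "Suc k \<le> LL code H Z k (Suc b)" by (rule Suc.IH)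
  thus ?case using tZ_ge[of "LL code H Z k (Suc b) - 1" H "(JZ code H ^^ b) Z"] by simp
qed simp

lemma iterL:
  assumes om: "oracle_model code H"
  shows "(Jfin code H ^^ m) (restr ((JZ code H ^^ b) Z) (LL code H Z (m + r) b))
       = restr ((JZ code H ^^ (b+m)) Z) (LL code H Z r (b+m))"
proof (induction m arbitrary: b)
  case 0 thus ?case by simp
next
  case (Suc m)
  define j where "j = LL code H Z (m + r) (Suc b) - 1"
  have sj: "Suc j = LL code H Z (m + r) (Suc b)" using LL_ge[of "m+r" code H Z "Suc b"] j_def by simp
  have "Jfin code H (restr ((JZ code H ^^ b) Z) (LL code H Z (Suc m + r) b))
     = Jfin code H (restr ((JZ code H ^^ b) Z) (tZ H ((JZ code H ^^ b) Z) j))" by (simp add: j_def)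
  also have "\<dots> = restr (JZ code H ((JZ code H ^^ b) Z)) (Suc j)" by (rule lemmaC[OF om refl])
  also have "\<dots> = restr ((JZ code H ^^ Suc b) Z) (LL code H Z (m + r) (Suc b))" using sj by simp
  finally have "(Jfin code H ^^ Suc m) (restr ((JZ code H ^^ b) Z) (LL code H Z (Suc m + r) b))
     = (Jfin code H ^^ m) (restr ((JZ code H ^^ Suc b) Z) (LL code H Z (m + r) (Suc b)))"
    by (simp add: funpow_Suc_right del: funpow.simps)
  also have "\<dots> = restr ((JZ code H ^^ (b + Suc m)) Z) (LL code H Z r (b + Suc m))"
    using Suc.IH[of "Suc b"] by simp
  finally show ?case .
qed


lemma iter_len: "length ((Jfin code H ^^ n) \<sigma>) \<le> length \<sigma> - n"
proof (induction n)
  case (Suc n)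
  thus ?case using Jfin_len_le[of code H "(Jfin code H ^^ n) \<sigma>"] by simp
qed simp

lemma iter_ex: "\<exists>n. (Jfin code H ^^ n) \<sigma> = []"
  using iter_len[where n="length \<sigma>" and code=code and H=H and \<sigma>=\<sigma>] by auto

lemma Jfinomega_facts:
  assumes "restr Y n = Jfinomega code H \<sigma>" "n < length \<sigma>"
  shows "\<forall>m\<le>n. (Jfin code H ^^ m) \<sigma> \<noteq> []"
    and "\<forall>i<n. Y i = (Jfin code H ^^ Suc i) \<sigma> ! 0"
proof -
  define M where "M = (LEAST n. (Jfin code H ^^ n) \<sigma> = [])"
  have len: "length (Jfinomega code H \<sigma>) = M - 1" by (simp add: Jfinomega_def M_def)
  hence nM: "n = M - 1" using assms(1)[symmetric] by simp
  have "M \<noteq> 0"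
  proof
    assume "M = 0"
    hence "(Jfin code H ^^ 0) \<sigma> = []" using LeastI_ex[OF iter_ex[of code H \<sigma>]] M_def by simp
    thus False using assms(2) by simp
  qed
  hence MS: "M = Suc n" using nM by simp
  show "\<forall>m\<le>n. (Jfin code H ^^ m) \<sigma> \<noteq> []"
    using not_less_Least[where P="\<lambda>n. (Jfin code H ^^ n) \<sigma> = []"] M_def MS by (metis le_imp_less_Suc)
  show "\<forall>i<n. Y i = (Jfin code H ^^ Suc i) \<sigma> ! 0"
  proof (intro allI impI)
    fix i assume "i < n"
    have "Y i = restr Y n ! i" using \<open>i < n\<close> by simp
    also have "\<dots> = Jfinomega code H \<sigma> ! i" using assms(1) by simp
    also have "\<dots> = (Jfin code H ^^ Suc i) \<sigma> ! 0"
      using \<open>i < n\<close> nM by (simp add: Jfinomega_def M_def)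
    finally show "Y i = (Jfin code H ^^ Suc i) \<sigma> ! 0" .
  qed
qed

lemma lemmaD:
  assumes inj: "inj code" and i: "i < length (Jfin code H \<tau>)" "i < length (Jfin code H \<tau>')"
    and eq: "Jfin code H \<tau> ! i = Jfin code H \<tau>' ! i" and j: "j \<le> Suc i"
  shows "j < length \<tau> \<and> j < length \<tau>' \<and> \<tau> ! j = \<tau>' ! j"
proof -
  have "code (take (tF H \<tau> i) \<tau>) = code (take (tF H \<tau>' i) \<tau>')"
    using eq Jfin_nth[OF i(1)] Jfin_nth[OF i(2)] by simp
  hence tk: "take (tF H \<tau> i) \<tau> = take (tF H \<tau>' i) \<tau>'" using inj by (simp add: inj_eq)
  have l1: "tF H \<tau> i \<le> length \<tau>" "tF H \<tau>' i \<le> length \<tau>'" using Jfin_tF_le i by auto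
  have g1: "j < tF H \<tau> i" "j < tF H \<tau>' i" using tF_ge[of i H \<tau>] tF_ge[of i H \<tau>'] j by auto
  have "\<tau> ! j = take (tF H \<tau> i) \<tau> ! j" using g1 by simp
  also have "\<dots> = take (tF H \<tau>' i) \<tau>' ! j" using tk by simp
  also have "\<dots> = \<tau>' ! j" using g1 by simp
  finally show ?thesis using l1 g1 by simp
qed


lemma dir1:
  assumes om: "oracle_model code H"
  shows "\<exists>\<sigma>. \<sigma> = restr Z (length \<sigma>) \<and> length \<sigma> > n \<and> restr (JZomega code H Z) n = Jfinomega code H \<sigma>"
proof -
  define \<sigma> where "\<sigma> = restr Z (LL code H Z n 0)"
  have it: "(Jfin code H ^^ m) \<sigma> = restr ((JZ code H ^^ m) Z) (LL code H Z (n - m) m)" if "m \<le> n" for m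
    using iterL[OF om, of m 0 Z "n - m"] that by (simp add: \<sigma>_def)
  have ne: "(Jfin code H ^^ m) \<sigma> \<noteq> []" if "m \<le> n" for m
  proof -
    have "length ((Jfin code H ^^ m) \<sigma>) = LL code H Z (n - m) m" using it[OF that] by simp
    thus ?thesis using LL_ge[of "n-m" code H Z m] by auto
  qed
  have e: "(Jfin code H ^^ Suc n) \<sigma> = []"
    using it[of n] by (simp add: Jfin_short)
  have M: "(LEAST k. (Jfin code H ^^ k) \<sigma> = []) = Suc n"
  proof (rule Least_equality)
    show "(Jfin code H ^^ Suc n) \<sigma> = []" by (rule e)
    fix y assume "(Jfin code H ^^ y) \<sigma> = []"
    thus "Suc n \<le> y" using ne by (metis not_less_eq_eq)
  qed
  have "restr (JZomega code H Z) n = Jfinomega code H \<sigma>"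
  proof (rule nth_equalityI)
    show "length (restr (JZomega code H Z) n) = length (Jfinomega code H \<sigma>)"
      by (simp add: Jfinomega_def M)
    fix i assume "i < length (restr (JZomega code H Z) n)"
    hence i: "i < n" by simp
    have "(Jfin code H ^^ Suc i) \<sigma> ! 0 = (JZ code H ^^ Suc i) Z 0"
      using it[of "Suc i"] i LL_ge[of "n - Suc i" code H Z "Suc i"] by simp
    thus "restr (JZomega code H Z) n ! i = Jfinomega code H \<sigma> ! i"
      using i by (simp add: Jfinomega_def M JZomega_def del: funpow.simps)
  qed
  moreover have "\<sigma> = restr Z (length \<sigma>)" by (simp add: \<sigma>_def)
  moreover have "length \<sigma> > n" using LL_ge[of n code H Z 0] by (simp add: \<sigma>_def)
  ultimately show ?thesis by blast
qed

lemma dir2: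
  assumes om: "oracle_model code H"
    and h: "\<forall>n. \<exists>\<sigma>. \<sigma> = restr Z (length \<sigma>) \<and> length \<sigma> > n \<and> restr Y n = Jfinomega code H \<sigma>"
  shows "Y = JZomega code H Z"
proof -
  have inj: "inj code" using om by (simp add: oracle_model_def)
  obtain s where s: "\<And>n. s n = restr Z (length (s n)) \<and> length (s n) > n \<and> restr Y n = Jfinomega code H (s n)"
    using choice[OF h] by blast
  define T where "T m n = (Jfin code H ^^ m) (s n)" for m n
  define Xs where "Xs m = (JZ code H ^^ m) Z" for m
  have Tne: "T m n \<noteq> []" if "m \<le> n" for m n
    using Jfinomega_facts(1)[of Y n code H "s n"] s[of n] that by (simp add: T_def)
  have TY: "Y i = T (Suc i) n ! 0" if "i < n" for i n
    using Jfinomega_facts(2)[of Y n code H "s n"] s[of n] that by (simp add: T_def)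
  have TS: "T (Suc m) n = Jfin code H (T m n)" for m n by (simp add: T_def)
  have XS: "Xs (Suc m) = JZ code H (Xs m)" for m by (simp add: Xs_def)
  have const: "\<forall>(m::nat) (n::nat) (n'::nat). m + j < n \<longrightarrow> m + j < n' \<longrightarrow> j < length (T m n) \<and> T m n ! j = T m n' ! j" for j :: nat
  proof (induction j)
    case 0
    show ?case
    proof (intro allI impI)
      fix m n n' :: nat assume a: "m + 0 < n" "m + 0 < n'"
      have l: "0 < length (Jfin code H (T m n))" "0 < length (Jfin code H (T m n'))"
        using Tne[of "Suc m" n] Tne[of "Suc m" n'] a TS by auto
      have "Jfin code H (T m n) ! 0 = Jfin code H (T m n') ! 0"
        using TY[of m n] TY[of m n'] a TS by simp
      from lemmaD[OF inj l this, of 0] show "0 < length (T m n) \<and> T m n ! 0 = T m n' ! 0" by simp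
    qed
  next
    case (Suc j)
    show ?case
    proof (intro allI impI)
      fix m n n' :: nat assume a: "m + Suc j < n" "m + Suc j < n'"
      have "j < length (T (Suc m) n) \<and> T (Suc m) n ! j = T (Suc m) n' ! j"
        using Suc.IH[rule_format, of "Suc m" n n'] a by simp
      moreover have "j < length (T (Suc m) n')" using Suc.IH[rule_format, of "Suc m" n' n'] a by simp
      ultimately show "Suc j < length (T m n) \<and> T m n ! Suc j = T m n' ! Suc j"
        using lemmaD[OF inj, where i=j and \<tau>="T m n" and \<tau>'="T m n'" and j="Suc j" and H=H] TS by simp
    qed
  qed
  have cR: "j < length (T m n) \<and> T m n ! j = T m n' ! j" if "m + j < n" "m + j < n'" for m n n' j :: nat
    using const[of j] that by blast
  have correct: "\<forall>(j::nat) (n::nat). m + j < n \<longrightarrow> T m n ! j = Xs m j" for m :: nat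
  proof (induction m)
    case 0
    show ?case
    proof (intro allI impI)
      fix j n :: nat assume "0 + j < n"
      hence "j < length (s n)" using s[of n] by simp
      hence "s n ! j = Z j" using s[of n] by (metis restr_nth)
      thus "T 0 n ! j = Xs 0 j" by (simp add: T_def Xs_def)
    qed
  next
    case (Suc m)
    show ?case
    proof (intro allI impI)
      fix j n :: nat assume a: "Suc m + j < n"
      define X where "X = Xs m"
      define l0 where "l0 = tF H (T m n) j"
      define n' where "n' = n + m + l0 + tZ H X j + 1"
      define A where "A = n' - m"
      have a': "Suc m + j < n'" using a n'_def by simp
      have jl: "j < length (Jfin code H (T m n))" using cR[OF a a] TS[of m n] by simp
      have jl': "j < length (Jfin code H (T m n'))" using cR[OF a' a'] TS[of m n'] by simp
      have cn: "T (Suc m) n ! j = T (Suc m) n' ! j" using cR[OF a a'] by simp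
      have ag: "\<forall>k<A. T m n' ! k = X k"
      proof (intro allI impI)
        fix k assume "k < A"
        hence "m + k < n'" using A_def n'_def by simp
        thus "T m n' ! k = X k" using Suc.IH[rule_format, of k n'] X_def by simp
      qed
      have Al: "A \<le> length (T m n')"
      proof -
        have mA: "m + (A - 1) < n'" using A_def n'_def by simp
        have "A - 1 < length (T m n')" using cR[OF mA mA] by blast
        thus ?thesis by simp
      qed
      have tzA: "tZ H X j \<le> A" using A_def n'_def by simp
      have l0A: "l0 < A" using A_def n'_def by simp
      have "tF H (T m n') j = tZ H X j"
      proof (rule ccontr)
        assume ne: "tF H (T m n') j \<noteq> tZ H X j"
        hence gt: "A < tF H (T m n') j" using lemmaB[OF om Al ag tzA] by blast
        have "code (take (tF H (T m n') j) (T m n')) = code (take l0 (T m n))"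
          using cn TS Jfin_nth[OF jl] Jfin_nth[OF jl'] l0_def by simp
        hence "take (tF H (T m n') j) (T m n') = take l0 (T m n)" using inj by (simp add: inj_eq)
        hence "length (take (tF H (T m n') j) (T m n')) = length (take l0 (T m n))" by simp
        moreover have "tF H (T m n') j \<le> length (T m n')" using Jfin_tF_le[OF jl'] .
        moreover have "l0 \<le> length (T m n)" using Jfin_tF_le[OF jl] l0_def by simp
        ultimately have "tF H (T m n') j = l0" by simp
        thus False using gt l0A by simp
      qed
      hence "T (Suc m) n' ! j = code (take (tZ H X j) (T m n'))"
        using TS Jfin_nth[OF jl'] by simp
      also have "take (tZ H X j) (T m n') = restr X (tZ H X j)"
        using ag tzA Al by (intro nth_equalityI) auto
      also have "code (restr X (tZ H X j)) = Xs (Suc m) j"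
        using XS X_def by (simp add: JZ_def)
      finally show "T (Suc m) n ! j = Xs (Suc m) j" using cn by simp
    qed
  qed
  show ?thesis
  proof
    fix i
    have "Y i = T (Suc i) (Suc (Suc i)) ! 0" using TY by simp
    also have "\<dots> = Xs (Suc i) 0" using correct by simp
    also have "\<dots> = JZomega code H Z i" by (simp add: Xs_def JZomega_def del: funpow.simps)
    finally show "Y i = JZomega code H Z i" .
  qed
qed

theorem lemma5p11:
  fixes code :: "nat list \<Rightarrow> nat"
    and H :: "nat \<Rightarrow> nat \<Rightarrow> (nat \<Rightarrow> nat) \<Rightarrow> nat \<Rightarrow> bool"
    and Y Z :: "nat \<Rightarrow> nat"
  assumes "oracle_model code H"
  shows "Y = JZomega code H Z \<longleftrightarrow>
    (\<forall>n. \<exists>\<sigma>. \<sigma> = restr Z (length \<sigma>) \<and> length \<sigma> > n \<and> restr Y n = Jfinomega code H \<sigma>)"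
  using dir1[OF assms] dir2[OF assms] by blast

end
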